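(* Let $\Sigma$ be an alphabet and let $\mathcal P=(n,\Gamma,I,M,P,p_0,l)$ be a $\mathbb B\langle\Sigma\cup\{\epsilon\}\rangle$-$\omega$-pushdown automaton over $(\mathbb B\langle\langle\Sigma^*\rangle\rangle,\mathbb B\langle\langle\Sigma^\omega\rangle\rangle)$, and let $G_l$ be the mixed context-free grammar constructed from $\mathcal P$. Then $$L(G_l)=\|\mathcal P\|,$$ where $\|\mathcal P\|=I(M^* )_{p_0,\epsilon}P+I(M^{\omega,l})_{p_0}$ is identified with the set $\operatorname{supp}(I(M^* )_{p_0,\epsilon}P)\cup\operatorname{supp}(I(M^{\omega,l})_{p_0})\subseteq\Sigma^*\cup\Sigma^\omega$.
   Context: $\mathbb B=(\{0,1\},\vee,\wedge,{}^*,0,1)$ with $0^*=1^*=1$; $(\mathbb B\langle\langle\Sigma^*\rangle\rangle,\mathbb B\langle\langle\Sigma^\omega\rangle\rangle)$ (power series over finite/infinite words, identified with languages) is a complete semiring-semimodule pair (infinite sums = unions, infinite products = concatenations). $(s,a)$ is the coefficient of $a$ in $s$; $\mathbb B\langle\Sigma\cup\{\epsilon\}\rangle$ is the set of series with support in $\Sigma\cup\{\epsilon\}$. A pushdown transition matrix $M$ ($\Gamma^*\times\Gamma^*$ matrix with $n\times n$ blocks over $\mathbb B\langle\Sigma\cup\{\epsilon\}\rangle$) satisfies (i) for each $p\in\Gamma$ only finitely many blocks $M_{p,\pi}$ are nonzero, and (ii) $M_{\pi_1,\pi_2}=M_{p,\pi}$ if $\pi_1=p\pi'$, $\pi_2=\pi\pi'$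 for some $p\in\Gamma$, $\pi,\pi'\in\Gamma^*$, and $0$ otherwise. The automaton has states $1,\dots,n$, pushdown alphabet $\Gamma$, such an $M$, $I\in(\mathbb B\langle\Sigma\cup\{\epsilon\}\rangle)^{1\times n}$, $P\in(\mathbb B\langle\Sigma\cup\{\epsilon\}\rangle)^{n\times 1}$, $p_0\in\Gamma$, $l\in\{0,\dots,n\}$. $M^*=\sum_{m\ge0}M^m$ with blocks $(M^* )_{\pi,\pi'}$; with $P_l=\{(j_1,j_2,\dots)\in\{1,\dots,n\}^\omega\mid j_t\le l\text{ for infinitely many }t\}$, $((M^{\omega,l})_\pi)_i=\sum_{\pi_1,\pi_2,\ldots\in\Gamma^*}\sum_{(j_1,j_2,\ldots)\in P_l}(M_{\pi,\pi_1})_{i,j_1}(M_{\pi_1,\pi_2})_{j_1,j_2}\cdots$. The mixed context-free grammar $G_l=(X,Z,\Sigma,P_X,P_Z,x_0,z_0,l)$ has variables $X=\{x_0\}\cup\{[i,p,j]\mid 1\le i,j\le n,\ p\in\Gamma\}$, $Z=\{z_0\}\cup\{[i,p]\mid1\le i\le n,\ p\in\Gamma\}$, and productions: $P_X$: $x_0\to a_1[m_1,p_0,m_2]a_2$ whenever $(I_{m_1},a_1)\ne0$, $(P_{m_2},a_2)\ne0$, $a_1,a_2\in\Sigma\cup\{\epsilon\}$; and $[i,p,j]\to a[m_1,p_1,m_2][m_2,p_2,m_3]\cdots[m_k,p_k,j]$ whenever $k\ge0$, $p_1,\dots,p_k\in\Gamma$, $1\le m_1,\dots,m_k\le n$, $a\in\Sigma\cup\{\epsilon\}$,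 $((M_{p,p_1\dots p_k})_{i,m_1},a)\ne0$ (for $k=0$: $[i,p,j]\to a$ with $((M_{p,\epsilon})_{i,j},a)\ne0$). $P_Z$: $z_0\to a[m,p_0]$ whenever $(I_m,a)\ne0$, $a\in\Sigma\cup\{\epsilon\}$; and $[i,p]\to a[m_1,p_1,m_2]\cdots[m_{j-1},p_{j-1},m_j][m_j,p_j]$ whenever $k\ge1$, $1\le j\le k$, $p_1,\dots,p_k\in\Gamma$, $1\le m_1,\dots,m_j\le n$, $a\in\Sigma\cup\{\epsilon\}$, $((M_{p,p_1\dots p_k})_{i,m_1},a)\ne0$. An infinite derivation of $w\in\Sigma^\omega$ is a sequence $z_0\Rightarrow\alpha_0[i_0,q_0]\Rightarrow_L^*w_0[i_0,q_0]\Rightarrow w_0\alpha_1[i_1,q_1]\Rightarrow_L^*w_0w_1[i_1,q_1]\Rightarrow\cdots$ where $z_0\to\alpha_0[i_0,q_0]$ and $[i_m,q_m]\to\alpha_{m+1}[i_{m+1},q_{m+1}]$ are in $P_Z$, each $\alpha_m\Rightarrow_L^*w_m\in\Sigma^*$ is a finite leftmost derivation with $P_X$, and $w=w_0w_1\cdots$. It is a derivation $z_0\Rightarrow_L^{\omega,l}w$ if, with $i_m^1,\dots,i_m^{t_m}$ the first components of the triple variables rewritten (in order) in $\alpha_m\Rightarrow_L^*w_m$, the sequence $i_0,i_1^1,\dots,i_1^{t_1},i_1,i_2^1,\dots,i_2^{t_2},i_2,\dots$ lies in $P_l$. $L(G_l)=\{w\in\Sigma^*\mid x_0\Rightarrow_L^*w\}\cup\{w\in\Sigma^\omega\mid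 z_0\Rightarrow_L^{\omega,l}w\}$. *)

theory Defs
  imports Main
begin

text \<open>Series in B<<Sigma*>> are identified with languages ('a list set), series in
B<<Sigma^omega>> with sets of infinite words (nat => 'a). A coefficient set in
B<Sigma u {eps}> is a set of 'a option, where None stands for the empty word eps.\<close>

definition sym_lang :: "'a option set \<Rightarrow> 'a list set" where
  "sym_lang S = (\<lambda>x. case x of None \<Rightarrow> [] | Some a \<Rightarrow> [a]) ` S"

definition lconc :: "'a list set \<Rightarrow> 'a list set \<Rightarrow> 'a list set" where
  "lconc A B = {u @ v | u v. u \<in> A \<and> v \<in> B}"

definition fw_conc :: "'a list \<Rightarrow> (nat \<Rightarrow> 'a) \<Rightarrow> (nat \<Rightarrow> 'a)" where
  "fw_conc u w = (\<lambda>k. if k < length u then u ! k else w (k - length u))"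

text \<open>The infinite word w is the concatenation ws 0 ws 1 ws 2 ... (meaningful when
infinitely many ws t are nonempty).\<close>
definition omega_concat :: "(nat \<Rightarrow> 'a list) \<Rightarrow> (nat \<Rightarrow> 'a) \<Rightarrow> bool" where
  "omega_concat ws w \<longleftrightarrow>
     (\<forall>t. map w [0..<length (concat (map ws [0..<t]))] = concat (map ws [0..<t]))"

definition inf_prod :: "(nat \<Rightarrow> 'a list set) \<Rightarrow> (nat \<Rightarrow> 'a) set" where
  "inf_prod L = {w. \<exists>ws. (\<forall>t. ws t \<in> L t) \<and> infinite {t. ws t \<noteq> []} \<and> omega_concat ws w}"

text \<open>Blocks: Mb p \<pi> i j is the (i,j)-entry of the block M_{p,\<pi>}; states are 1..n.\<close>

definition pd_trans_wf :: "nat \<Rightarrow> ('g \<Rightarrow> 'g list \<Rightarrow> nat \<Rightarrow> nat \<Rightarrow> 'a option set) \<Rightarrow> bool" where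
  "pd_trans_wf n Mb \<longleftrightarrow>
     (\<forall>p. finite {\<pi>. \<exists>i\<in>{1..n}. \<exists>j\<in>{1..n}. Mb p \<pi> i j \<noteq> {}})"

text \<open>Matrices indexed by (stack, state) x (stack, state), entries languages.\<close>
type_synonym ('g,'a) lmat = "'g list \<Rightarrow> nat \<Rightarrow> 'g list \<Rightarrow> nat \<Rightarrow> 'a list set"

text \<open>The full pushdown transition matrix M, determined by its blocks via condition (ii).\<close>
definition pd_mat :: "nat \<Rightarrow> ('g \<Rightarrow> 'g list \<Rightarrow> nat \<Rightarrow> nat \<Rightarrow> 'a option set) \<Rightarrow> ('g,'a) lmat" where
  "pd_mat n Mb = (\<lambda>\<pi>1 i \<pi>2 j.
     if i \<in> {1..n} \<and> j \<in> {1..n} then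
       sym_lang (case \<pi>1 of [] \<Rightarrow> {}
                 | p # \<pi>' \<Rightarrow> \<Union>{Mb p \<pi> i j | \<pi>. \<pi>2 = \<pi> @ \<pi>'})
     else {})"

definition mat_mult :: "nat \<Rightarrow> ('g,'a) lmat \<Rightarrow> ('g,'a) lmat \<Rightarrow> ('g,'a) lmat" where
  "mat_mult n A B = (\<lambda>\<pi>1 i \<pi>2 j. \<Union>\<pi>. \<Union>k\<in>{1..n}. lconc (A \<pi>1 i \<pi> k) (B \<pi> k \<pi>2 j))"

definition mat_one :: "nat \<Rightarrow> ('g,'a) lmat" where
  "mat_one n = (\<lambda>\<pi>1 i \<pi>2 j. if \<pi>1 = \<pi>2 \<and> i = j \<and> i \<in> {1..n} then {[]} else {})"

definition mat_star :: "nat \<Rightarrow> ('g,'a) lmat \<Rightarrow> ('g,'a) lmat" where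
  "mat_star n A = (\<lambda>\<pi>1 i \<pi>2 j. \<Union>m. ((mat_mult n A ^^ m) (mat_one n)) \<pi>1 i \<pi>2 j)"

definition Pl :: "nat \<Rightarrow> nat \<Rightarrow> (nat \<Rightarrow> nat) set" where
  "Pl n l = {js. (\<forall>t. js t \<in> {1..n}) \<and> infinite {t. js t \<le> l}}"

definition mat_omega :: "nat \<Rightarrow> nat \<Rightarrow> ('g,'a) lmat \<Rightarrow> 'g list \<Rightarrow> nat \<Rightarrow> (nat \<Rightarrow> 'a) set" where
  "mat_omega n l A \<pi> i = {w. \<exists>\<pi>s js. \<pi>s 0 = \<pi> \<and> js 0 = i \<and> (\<lambda>t. js (Suc t)) \<in> Pl n l \<and>
       w \<in> inf_prod (\<lambda>t. A (\<pi>s t) (js t) (\<pi>s (Suc t)) (js (Suc t)))}"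

text \<open>Behaviour ||P|| = I (M^* )_{p0,eps} P + I (M^{omega,l})_{p0}, as a set of
finite (Inl) and infinite (Inr) words.\<close>
definition pda_behaviour ::
  "nat \<Rightarrow> ('g \<Rightarrow> 'g list \<Rightarrow> nat \<Rightarrow> nat \<Rightarrow> 'a option set) \<Rightarrow> (nat \<Rightarrow> 'a option set) \<Rightarrow>
   (nat \<Rightarrow> 'a option set) \<Rightarrow> 'g \<Rightarrow> nat \<Rightarrow> ('a list + (nat \<Rightarrow> 'a)) set" where
  "pda_behaviour n Mb Iv Pv p0 l =
     Inl ` (\<Union>i\<in>{1..n}. \<Union>j\<in>{1..n}.
              lconc (lconc (sym_lang (Iv i)) (mat_star n (pd_mat n Mb) [p0] i [] j)) (sym_lang (Pv j)))
   \<union> Inr ` (\<Union>i\<in>{1..n}. {fw_conc u w | u w. u \<in> sym_lang (Iv i) \<and>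
                          w \<in> mat_omega n l (pd_mat n Mb) [p0] i})"

datatype ('a,'g) gsym = Tm 'a | X0 | Trip nat 'g nat | Z0 | Zp nat 'g

definition opt_tm :: "'a option \<Rightarrow> ('a,'g) gsym list" where
  "opt_tm x = (case x of None \<Rightarrow> [] | Some a \<Rightarrow> [Tm a])"

fun first_comp :: "('a,'g) gsym \<Rightarrow> nat list" where
  "first_comp (Trip i p j) = [i]"
| "first_comp _ = []"

text \<open>lderiv R \<alpha> is \<gamma>: leftmost derivation \<alpha> =>_L^* \<gamma> using productions R, where is lists
(in order) the first components of the triple variables rewritten.\<close>
inductive lderiv :: "(('a,'g) gsym \<Rightarrow> ('a,'g) gsym list \<Rightarrow> bool) \<Rightarrow>
    ('a,'g) gsym list \<Rightarrow> nat list \<Rightarrow> ('a,'g) gsym list \<Rightarrow> bool" for R where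
  refl: "lderiv R \<alpha> [] \<alpha>"
| step: "R A rhs \<Longrightarrow> set u \<subseteq> range Tm \<Longrightarrow> lderiv R (u @ rhs @ \<beta>) is \<gamma> \<Longrightarrow>
         lderiv R (u @ A # \<beta>) (first_comp A @ is) \<gamma>"

definition mcfg_lang ::
  "(('a,'g) gsym \<Rightarrow> ('a,'g) gsym list \<Rightarrow> bool) \<Rightarrow> (('a,'g) gsym \<Rightarrow> ('a,'g) gsym list \<Rightarrow> bool) \<Rightarrow>
   nat \<Rightarrow> nat \<Rightarrow> ('a list + (nat \<Rightarrow> 'a)) set" where
  "mcfg_lang RX RZ n l =
     Inl ` {w. \<exists>is. lderiv RX [X0] is (map Tm w)}
   \<union> Inr ` {w. \<exists>\<alpha> iz q ws is.
        RZ Z0 (\<alpha> 0 @ [Zp (iz 0) (q 0)]) \<and>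
        (\<forall>m. RZ (Zp (iz m) (q m)) (\<alpha> (Suc m) @ [Zp (iz (Suc m)) (q (Suc m))])) \<and>
        (\<forall>m. lderiv RX (\<alpha> m) (is m) (map Tm (ws m))) \<and>
        infinite {m. ws m \<noteq> []} \<and> omega_concat ws w \<and>
        (\<exists>js. omega_concat (\<lambda>m. case m of 0 \<Rightarrow> [iz 0] | Suc k \<Rightarrow> is (Suc k) @ [iz (Suc k)]) js
              \<and> js \<in> Pl n l)}"

definition GX :: "nat \<Rightarrow> ('g \<Rightarrow> 'g list \<Rightarrow> nat \<Rightarrow> nat \<Rightarrow> 'a option set) \<Rightarrow> (nat \<Rightarrow> 'a option set) \<Rightarrow>
   (nat \<Rightarrow> 'a option set) \<Rightarrow> 'g \<Rightarrow> ('a,'g) gsym \<Rightarrow> ('a,'g) gsym list \<Rightarrow> bool" where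
  "GX n Mb Iv Pv p0 A rhs \<longleftrightarrow>
     (A = X0 \<and> (\<exists>a1 a2 m1 m2. m1 \<in> {1..n} \<and> m2 \<in> {1..n} \<and> a1 \<in> Iv m1 \<and> a2 \<in> Pv m2 \<and>
                 rhs = opt_tm a1 @ [Trip m1 p0 m2] @ opt_tm a2))
   \<or> (\<exists>i p j ps ms a. A = Trip i p j \<and> i \<in> {1..n} \<and> j \<in> {1..n} \<and>
        length ms = length ps \<and> set ms \<subseteq> {1..n} \<and> a \<in> Mb p ps i (hd (ms @ [j])) \<and>
        rhs = opt_tm a @ map (\<lambda>t. Trip ((ms @ [j]) ! t) (ps ! t) ((ms @ [j]) ! Suc t)) [0..<length ps])"

definition GZ :: "nat \<Rightarrow> ('g \<Rightarrow> 'g list \<Rightarrow> nat \<Rightarrow> nat \<Rightarrow> 'a option set) \<Rightarrow> (nat \<Rightarrow> 'a option set) \<Rightarrow>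
   'g \<Rightarrow> ('a,'g) gsym \<Rightarrow> ('a,'g) gsym list \<Rightarrow> bool" where
  "GZ n Mb Iv p0 A rhs \<longleftrightarrow>
     (A = Z0 \<and> (\<exists>a m. m \<in> {1..n} \<and> a \<in> Iv m \<and> rhs = opt_tm a @ [Zp m p0]))
   \<or> (\<exists>i p ps ms jj a. A = Zp i p \<and> i \<in> {1..n} \<and> 1 \<le> jj \<and> jj \<le> length ps \<and>
        length ms = jj \<and> set ms \<subseteq> {1..n} \<and> a \<in> Mb p ps i (ms ! 0) \<and>
        rhs = opt_tm a @ map (\<lambda>t. Trip (ms ! t) (ps ! t) (ms ! Suc t)) [0..<jj - 1]
              @ [Zp (ms ! (jj - 1)) (ps ! (jj - 1))])"

end

theory Submission
  imports Defs
begin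

definition ol :: "'a option \<Rightarrow> 'a list" where
  "ol x = (case x of None \<Rightarrow> [] | Some a \<Rightarrow> [a])"

lemma sym_lang_ol: "sym_lang S = ol ` S"
  unfolding sym_lang_def ol_def by simp

lemma opt_tm_ol: "opt_tm x = map Tm (ol x)"
  by (cases x) (simp_all add: opt_tm_def ol_def)

lemma pd_mat_iff: "x \<in> pd_mat n Mb \<pi>1 i \<pi>2 j \<longleftrightarrow> i \<in> {1..n} \<and> j \<in> {1..n} \<and>
   (\<exists>p \<pi>' ps a. \<pi>1 = p # \<pi>' \<and> \<pi>2 = ps @ \<pi>' \<and> a \<in> Mb p ps i j \<and> x = ol a)"
  unfolding pd_mat_def sym_lang_ol by (cases \<pi>1) auto

inductive run :: "nat \<Rightarrow> ('g \<Rightarrow> 'g list \<Rightarrow> nat \<Rightarrow> nat \<Rightarrow> 'a option set) \<Rightarrow>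
   'g list \<Rightarrow> nat \<Rightarrow> 'a list \<Rightarrow> nat list \<Rightarrow> 'g list \<Rightarrow> nat \<Rightarrow> bool"
  for n Mb where
  rrefl: "i \<in> {1..n} \<Longrightarrow> run n Mb \<pi> i [] [] \<pi> i"
| rstep: "a \<in> Mb p ps i k \<Longrightarrow> i \<in> {1..n} \<Longrightarrow> k \<in> {1..n} \<Longrightarrow>
    run n Mb (ps @ \<pi>') k w ss \<pi>2 j \<Longrightarrow> run n Mb (p # \<pi>') i (ol a @ w) (i # ss) \<pi>2 j"

lemma run_Nil_ss: "run n Mb \<pi>1 i w [] \<pi>2 j \<longleftrightarrow> (\<pi>1 = \<pi>2 \<and> i = j \<and> i \<in> {1..n} \<and> w = [])"
  by (auto elim: run.cases intro: run.intros)

lemma run_Cons_ss: "run n Mb \<pi>1 i w (s # ss) \<pi>2 j \<longleftrightarrow>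
   (\<exists>p \<pi>' ps a k w'. \<pi>1 = p # \<pi>' \<and> s = i \<and> a \<in> Mb p ps i k \<and> i \<in> {1..n} \<and> k \<in> {1..n} \<and>
       run n Mb (ps @ \<pi>') k w' ss \<pi>2 j \<and> w = ol a @ w')"
  apply (rule iffI)
   apply (erule run.cases)
    apply simp
   apply blast
  apply (blast intro: run.intros)
  done

lemma pow_run: "w \<in> ((mat_mult n (pd_mat n Mb) ^^ m) (mat_one n)) \<pi>1 i \<pi>2 j \<longleftrightarrow>
   (\<exists>ss. length ss = m \<and> run n Mb \<pi>1 i w ss \<pi>2 j)"
proof (induction m arbitrary: \<pi>1 i w)
  case 0
  show ?case by (auto simp: mat_one_def run_Nil_ss)
next
  case (Suc m)
  show ?case
  proof
    assume "w \<in> (mat_mult n (pd_mat n Mb) ^^ Suc m) (mat_one n) \<pi>1 i \<pi>2 j"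
    then obtain \<pi> k u v where u: "u \<in> pd_mat n Mb \<pi>1 i \<pi> k" and
      v: "v \<in> (mat_mult n (pd_mat n Mb) ^^ m) (mat_one n) \<pi> k \<pi>2 j" and w: "w = u @ v"
      by (auto simp: mat_mult_def lconc_def)
    from v Suc.IH obtain ss where "length ss = m" "run n Mb \<pi> k v ss \<pi>2 j" by blast
    with u w show "\<exists>ss. length ss = Suc m \<and> run n Mb \<pi>1 i w ss \<pi>2 j"
      by (auto simp: pd_mat_iff intro!: exI[of _ "i # ss"] rstep)
  next
    assume "\<exists>ss. length ss = Suc m \<and> run n Mb \<pi>1 i w ss \<pi>2 j"
    then obtain s ss where "length ss = m" "run n Mb \<pi>1 i w (s # ss) \<pi>2 j"
      by (metis length_Suc_conv)
    then obtain p \<pi>' ps a k w' where r: "\<pi>1 = p # \<pi>'" "a \<in> Mb p ps i k" "i \<in> {1..n}" "k \<in> {1..n}"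
       "run n Mb (ps @ \<pi>') k w' ss \<pi>2 j" "w = ol a @ w'" "length ss = m"
      by (auto simp: run_Cons_ss)
    then have "w' \<in> (mat_mult n (pd_mat n Mb) ^^ m) (mat_one n) (ps @ \<pi>') k \<pi>2 j"
      using Suc.IH by blast
    moreover have "ol a \<in> pd_mat n Mb \<pi>1 i (ps @ \<pi>') k" using r by (auto simp: pd_mat_iff)
    ultimately show "w \<in> (mat_mult n (pd_mat n Mb) ^^ Suc m) (mat_one n) \<pi>1 i \<pi>2 j"
      using r(3,4,6) by (auto simp: mat_mult_def lconc_def intro!: exI[of _ "ps @ \<pi>'"] bexI[of _ k])
  qed
qed

lemma mat_star_run: "w \<in> mat_star n (pd_mat n Mb) \<pi>1 i \<pi>2 j \<longleftrightarrow> (\<exists>ss. run n Mb \<pi>1 i w ss \<pi>2 j)"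
  unfolding mat_star_def using pow_run by blast


inductive ch :: "nat \<Rightarrow> nat \<Rightarrow> 'g list \<Rightarrow> nat \<Rightarrow> ('a,'g) gsym list \<Rightarrow> bool" for n where
  chn: "i \<in> {1..n} \<Longrightarrow> ch n i [] i []"
| chc: "ch n m \<gamma> j xs \<Longrightarrow> i \<in> {1..n} \<Longrightarrow> ch n i (p # \<gamma>) j (Trip i p m # xs)"

lemma ch_range: "ch n i \<gamma> j xs \<Longrightarrow> i \<in> {1..n} \<and> j \<in> {1..n}"
  by (induction rule: ch.induct) auto

lemma ch_append: "ch n i \<gamma>1 m xs1 \<Longrightarrow> ch n m \<gamma>2 j xs2 \<Longrightarrow> ch n i (\<gamma>1 @ \<gamma>2) j (xs1 @ xs2)"
  by (induction rule: ch.induct) (auto intro: ch.intros)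

lemma ch_split: "ch n i (\<gamma>1 @ \<gamma>2) j xs \<Longrightarrow>
   \<exists>m xs1 xs2. xs = xs1 @ xs2 \<and> ch n i \<gamma>1 m xs1 \<and> ch n m \<gamma>2 j xs2"
proof (induction \<gamma>1 arbitrary: i xs)
  case Nil
  then have "i \<in> {1..n}" using ch_range by blast
  then show ?case using Nil by (metis append_Nil ch.chn)
next
  case (Cons p \<gamma>1)
  from Cons.prems obtain m xs' where "xs = Trip i p m # xs'" "ch n m (\<gamma>1 @ \<gamma>2) j xs'" "i \<in> {1..n}"
    by (auto elim: ch.cases)
  then show ?case using Cons.IH by (metis append_Cons ch.chc)
qed

lemma ch_trips: "length L = Suc k \<Longrightarrow> k \<le> length ps \<Longrightarrow> set L \<subseteq> {1..n} \<Longrightarrow>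
   ch n (L ! 0) (take k ps) (L ! k) (map (\<lambda>t. Trip (L!t) (ps!t) (L!Suc t)) [0..<k])"
proof (induction k arbitrary: L ps)
  case 0
  then show ?case by (cases L) (auto intro: ch.intros)
next
  case (Suc k)
  obtain x L' where L: "L = x # L'" using Suc.prems by (cases L) auto
  obtain p ps' where ps: "ps = p # ps'" using Suc.prems by (cases ps) auto
  have "x \<in> {1..n}" using Suc.prems L by auto
  then show ?case using L ps Suc.IH[of L' ps'] Suc.prems by (auto simp: map_upt_Suc simp del: upt_Suc intro!: ch.intros)
qed

lemma ch_trips_inv: "ch n i \<gamma> j xs \<Longrightarrow> \<exists>L. length L = Suc (length \<gamma>) \<and> L ! 0 = i \<and>
   L ! length \<gamma> = j \<and> set L \<subseteq> {1..n} \<and>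
   xs = map (\<lambda>t. Trip (L!t) (\<gamma>!t) (L!Suc t)) [0..<length \<gamma>]"
proof (induction rule: ch.induct)
  case (chn i) then show ?case by (intro exI[of _ "[i]"]) auto
next
  case (chc m \<gamma> j xs i p)
  then obtain L where L: "length L = Suc (length \<gamma>)" "L ! 0 = m" "L ! length \<gamma> = j"
    "set L \<subseteq> {1..n}" "xs = map (\<lambda>t. Trip (L!t) (\<gamma>!t) (L!Suc t)) [0..<length \<gamma>]" by blast
  show ?case
    apply (rule exI[of _ "i # L"]) using L chc by (auto simp: map_upt_Suc simp del: upt_Suc)
qed

lemma lderiv_prefix: "lderiv R \<beta> is \<gamma> \<Longrightarrow> lderiv R (map Tm v @ \<beta>) is (map Tm v @ \<gamma>)"
proof (induction rule: lderiv.induct)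
  case (refl \<alpha>) show ?case by (rule lderiv.refl)
next
  case (step A rhs u \<beta> "is" \<gamma>)
  have "lderiv R ((map Tm v @ u) @ A # \<beta>) (first_comp A @ is) (map Tm v @ \<gamma>)"
    by (rule lderiv.step) (use step in auto)
  then show ?case by simp
qed

lemma lderiv_suffix: "lderiv R \<beta> is \<gamma> \<Longrightarrow> lderiv R (\<beta> @ \<delta>) is (\<gamma> @ \<delta>)"
proof (induction rule: lderiv.induct)
  case (refl \<alpha>) show ?case by (rule lderiv.refl)
next
  case (step A rhs u \<beta> "is" \<gamma>)
  have "lderiv R (u @ A # (\<beta> @ \<delta>)) (first_comp A @ is) (\<gamma> @ \<delta>)"
    by (rule lderiv.step) (use step in auto)
  then show ?case by simp
qed

lemma first_nt: "u0 @ A # \<beta>' = map Tm u @ B # rest \<Longrightarrow> set u0 \<subseteq> range Tm \<Longrightarrow>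
  A \<notin> range Tm \<Longrightarrow> B \<notin> range Tm \<Longrightarrow> u0 = map Tm u \<and> A = B \<and> \<beta>' = rest"
proof (induction u0 arbitrary: u)
  case Nil
  show ?case
  proof (cases u)
    case Nil then show ?thesis using Nil.prems(1) by simp
  next
    case (Cons y u')
    then have "A = Tm y" using Nil.prems(1) by simp
    then show ?thesis using Nil.prems(3) by blast
  qed
next
  case (Cons x u0)
  show ?case
  proof (cases u)
    case Nil
    then have "x = B" using Cons.prems(1) by simp
    moreover have "x \<in> range Tm" using Cons.prems(2) by simp
    ultimately show ?thesis using Cons.prems(4) by blast
  next
    case (Cons y u')
    then have e: "x = Tm y" "u0 @ A # \<beta>' = map Tm u' @ B # rest" using Cons.prems(1) by simp_all
    have "set u0 \<subseteq> range Tm" using Cons.prems(2) by simp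
    from Cons.IH[OF e(2) this Cons.prems(3,4)] show ?thesis using e(1) Cons by simp
  qed
qed

lemma inj_Tm: "inj Tm" by (simp add: inj_def)

lemma GX_lhs: "GX n Mb Iv Pv p0 A rhs \<Longrightarrow> A \<notin> range Tm"
  unfolding GX_def by auto

lemma GX_Trip: "GX n Mb Iv Pv p0 (Trip i p m) rhs \<Longrightarrow> \<exists>ps ms a. i \<in> {1..n} \<and> m \<in> {1..n} \<and>
   length ms = length ps \<and> set ms \<subseteq> {1..n} \<and> a \<in> Mb p ps i (hd (ms @ [m])) \<and>
   rhs = opt_tm a @ map (\<lambda>t. Trip ((ms @ [m]) ! t) (ps ! t) ((ms @ [m]) ! Suc t)) [0..<length ps]"
  unfolding GX_def by auto

lemma fwd: fixes \<beta> :: "('a,'g) gsym list" shows "lderiv (GX n Mb Iv Pv p0) \<beta> is \<gamma> \<Longrightarrow> \<gamma> = map Tm w \<Longrightarrow> \<beta> = map Tm u @ xs @ map Tm v \<Longrightarrow>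
  ch n i gs j xs \<Longrightarrow> \<exists>w'. w = u @ w' @ v \<and> run n Mb gs i w' is [] j"
proof (induction arbitrary: u xs i gs rule: lderiv.induct)
  case (refl \<alpha>)
  have "xs = []"
  proof (rule ccontr)
    assume "xs \<noteq> []"
    then obtain x xs' where xx: "xs = x # xs'" by (cases xs) auto
    with refl.prems(3) obtain i' p m where "x = Trip i' p m" by (auto elim: ch.cases)
    with refl.prems(1,2) xx have e: "map Tm u @ Trip i' p m # xs' @ map Tm v = map Tm w" by simp
    have "Trip i' p m \<in> set (map Tm w)" unfolding e[symmetric] by simp
    then show False by auto
  qed
  with refl.prems(3) have "gs = []" "i = j" "i \<in> {1..n}" by (auto elim: ch.cases)
  moreover from refl.prems \<open>xs = []\<close> have "map Tm (u @ v) = (map Tm w :: ('a,'g) gsym list)" by simp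
  then have "w = u @ v" using inj_map_eq_map[OF inj_Tm] by metis
  ultimately show ?case by (auto intro: rrefl)
next
  case (step A rhs u0 \<beta>' iss \<gamma>)
  have Anot: "A \<notin> range Tm" using GX_lhs[OF step.hyps(1)] .
  have "xs \<noteq> []"
  proof
    assume "xs = []"
    then have e: "u0 @ A # \<beta>' = map Tm (u @ v)" using step.prems(2) by simp
    have "A \<in> set (map Tm (u @ v))" unfolding e[symmetric] by simp
    then show False using Anot by auto
  qed
  then obtain x xs' where xx: "xs = x # xs'" by (cases xs) auto
  with step.prems(3) obtain p gs' m where x: "x = Trip i p m" "gs = p # gs'" "ch n m gs' j xs'"
    "i \<in> {1..n}" by (auto elim: ch.cases)
  have fn: "u0 = map Tm u \<and> A = Trip i p m \<and> \<beta>' = xs' @ map Tm v"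
    by (rule first_nt) (use step.prems(2) step.hyps(2) xx x Anot in auto)
  have gxA: "GX n Mb Iv Pv p0 (Trip i p m) rhs" using step.hyps(1) fn by simp
  from GX_Trip[OF gxA] obtain ps ms a where g: "i \<in> {1..n}" "m \<in> {1..n}"
   "length ms = length ps" "set ms \<subseteq> {1..n}" "a \<in> Mb p ps i (hd (ms @ [m]))"
   "rhs = opt_tm a @ map (\<lambda>t. Trip ((ms @ [m]) ! t) (ps ! t) ((ms @ [m]) ! Suc t)) [0..<length ps]"
    by blast
  define xs1 :: "('a,'g) gsym list" where "xs1 = map (\<lambda>t. Trip ((ms @ [m]) ! t) (ps ! t) ((ms @ [m]) ! Suc t)) [0..<length ps]"
  have c1: "ch n (hd (ms @ [m])) ps m xs1"
    using ch_trips[of "ms @ [m]" "length ps" ps n] g unfolding xs1_def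
    by (simp add: hd_conv_nth nth_append)
  have c2: "ch n (hd (ms @ [m])) (ps @ gs') j (xs1 @ xs')" using ch_append[OF c1 x(3)] .
  have "u0 @ rhs @ \<beta>' = map Tm (u @ ol a) @ (xs1 @ xs') @ map Tm v"
    using fn g(6) by (simp add: xs1_def opt_tm_ol)
  from step.IH[OF step.prems(1) this c2] obtain w'' where
    w'': "w = (u @ ol a) @ w'' @ v" "run n Mb (ps @ gs') (hd (ms @ [m])) w'' iss [] j" by blast
  have "run n Mb (p # gs') i (ol a @ w'') (i # iss) [] j"
    by (rule rstep[OF g(5) g(1) _ w''(2)]) (use ch_range[OF c1] in auto)
  then show ?case using w'' fn x by auto
qed

lemma bwd: "run n Mb \<gamma> i w ss \<gamma>' j \<Longrightarrow> \<gamma>' = [] \<Longrightarrow>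
   \<exists>xs. ch n i \<gamma> j xs \<and> lderiv (GX n Mb Iv Pv p0) xs ss (map Tm w)"
proof (induction rule: run.induct)
  case (rrefl i \<pi>) then show ?case by (intro exI[of _ "[]"]) (auto intro: ch.intros lderiv.refl)
next
  case (rstep a p ps i k \<pi>' w ss \<pi>2 j)
  then obtain xs where xs: "ch n k (ps @ \<pi>') j xs" "lderiv (GX n Mb Iv Pv p0) xs ss (map Tm w)" by blast
  from ch_split[OF xs(1)] obtain m xs1 xs2 where s: "xs = xs1 @ xs2" "ch n k ps m xs1" "ch n m \<pi>' j xs2"
    by blast
  from ch_trips_inv[OF s(2)] obtain L where L: "length L = Suc (length ps)" "L ! 0 = k"
    "L ! length ps = m" "set L \<subseteq> {1..n}"
    "xs1 = map (\<lambda>t. Trip (L!t) (ps!t) (L!Suc t)) [0..<length ps]" by blast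
  have Leq: "butlast L @ [m] = L"
    using L(1,3) by (metis append_butlast_last_id diff_Suc_1 last_conv_nth list.size(3) nat.distinct(1))
  have hdL: "hd L = k" using L(1,2) by (cases L) auto
  have gx: "GX n Mb Iv Pv p0 (Trip i p m) (opt_tm a @ xs1)"
    unfolding GX_def
    apply (rule disjI2)
    apply (rule exI[of _ i], rule exI[of _ p], rule exI[of _ m], rule exI[of _ ps],
           rule exI[of _ "butlast L"], rule exI[of _ a])
    using L Leq rstep.hyps ch_range[OF s(2)] in_set_butlastD[of _ L]
    by (auto simp: hdL)
  have "lderiv (GX n Mb Iv Pv p0) ([] @ (opt_tm a @ xs1) @ xs2) ss (map Tm (ol a @ w))"
    using lderiv_prefix[OF xs(2), of "ol a"] s(1) by (simp add: opt_tm_ol)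
  from lderiv.step[OF gx _ this] have "lderiv (GX n Mb Iv Pv p0) (Trip i p m # xs2) (i # ss) (map Tm (ol a @ w))"
    by simp
  moreover have "ch n i (p # \<pi>') j (Trip i p m # xs2)" using s(3) rstep.hyps(2) by (rule chc)
  ultimately show ?case by blast
qed

lemma lconc_I: "u \<in> A \<Longrightarrow> v \<in> B \<Longrightarrow> u @ v \<in> lconc A B"
  unfolding lconc_def by blast

lemma lconc_E: "x \<in> lconc A B \<Longrightarrow> (\<And>u v. u \<in> A \<Longrightarrow> v \<in> B \<Longrightarrow> x = u @ v \<Longrightarrow> P) \<Longrightarrow> P"
  unfolding lconc_def by blast

lemma ch_single: "ch n i [p] j xs \<Longrightarrow> xs = [Trip i p j]"
  by (auto elim!: ch.cases)

lemma finite_part: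
  "{w. \<exists>is. lderiv (GX n Mb Iv Pv p0) [X0] is (map Tm w)} =
   (\<Union>i\<in>{1..n}. \<Union>j\<in>{1..n}. lconc (lconc (sym_lang (Iv i)) (mat_star n (pd_mat n Mb) [p0] i [] j)) (sym_lang (Pv j)))"
  (is "?L = ?R")
proof
  show "?L \<subseteq> ?R"
  proof
    fix w assume "w \<in> ?L"
    then obtain iss where d: "lderiv (GX n Mb Iv Pv p0) [X0] iss (map Tm w)" by blast
    then show "w \<in> ?R"
    proof (cases rule: lderiv.cases)
      case refl then show ?thesis by (cases w) auto
    next
      case (step A rhs u \<beta> is')
      from step(1) have "u = [] \<and> A = X0 \<and> \<beta> = []" by (cases u) auto
      with step have g: "GX n Mb Iv Pv p0 X0 rhs" and d2: "lderiv (GX n Mb Iv Pv p0) rhs is' (map Tm w)"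
        by auto
      from g obtain a1 a2 m1 m2 where m: "m1 \<in> {1..n}" "m2 \<in> {1..n}" "a1 \<in> Iv m1" "a2 \<in> Pv m2"
        "rhs = opt_tm a1 @ [Trip m1 p0 m2] @ opt_tm a2" unfolding GX_def by auto
      have c: "ch n m1 [p0] m2 [Trip m1 p0 m2]" using m by (auto intro!: ch.intros)
      from fwd[OF d2 HOL.refl _ c, of "ol a1" "ol a2"] m(5) obtain w' where
        w': "w = ol a1 @ w' @ ol a2" "run n Mb [p0] m1 w' is' [] m2" by (auto simp: opt_tm_ol)
      have ws: "w' \<in> mat_star n (pd_mat n Mb) [p0] m1 [] m2" using w'(2) mat_star_run by blast
      have s1: "ol a1 \<in> sym_lang (Iv m1)" "ol a2 \<in> sym_lang (Pv m2)" using m(3,4) by (auto simp: sym_lang_ol)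
      have "(ol a1 @ w') @ ol a2 \<in> lconc (lconc (sym_lang (Iv m1)) (mat_star n (pd_mat n Mb) [p0] m1 [] m2)) (sym_lang (Pv m2))"
        by (rule lconc_I[OF lconc_I[OF s1(1) ws] s1(2)])
      then have "w \<in> lconc (lconc (sym_lang (Iv m1)) (mat_star n (pd_mat n Mb) [p0] m1 [] m2)) (sym_lang (Pv m2))"
        using w'(1) by simp
      then show ?thesis using m(1,2) by blast
    qed
  qed
next
  show "?R \<subseteq> ?L"
  proof
    fix w assume "w \<in> ?R"
    then obtain i j where ij: "i \<in> {1..n}" "j \<in> {1..n}"
      "w \<in> lconc (lconc (sym_lang (Iv i)) (mat_star n (pd_mat n Mb) [p0] i [] j)) (sym_lang (Pv j))"
      by blast
    from ij(3) obtain x v where x1: "x \<in> lconc (sym_lang (Iv i)) (mat_star n (pd_mat n Mb) [p0] i [] j)"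
      "v \<in> sym_lang (Pv j)" "w = x @ v" by (rule lconc_E)
    from x1(2) obtain a2 where a2: "a2 \<in> Pv j" "v = ol a2" by (auto simp: sym_lang_ol)
    from x1(1) obtain u w' where x2: "u \<in> sym_lang (Iv i)" "w' \<in> mat_star n (pd_mat n Mb) [p0] i [] j"
      "x = u @ w'" by (rule lconc_E)
    from x2(1) obtain a1 where a1: "a1 \<in> Iv i" "u = ol a1" by (auto simp: sym_lang_ol)
    have m: "i \<in> {1..n}" "j \<in> {1..n}" "a1 \<in> Iv i" "a2 \<in> Pv j"
      "w' \<in> mat_star n (pd_mat n Mb) [p0] i [] j" "w = ol a1 @ w' @ ol a2"
      using ij x1 a2 x2 a1 by auto
    from m(5) obtain ss where r: "run n Mb [p0] i w' ss [] j" using mat_star_run by blast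
    from bwd[OF r HOL.refl] obtain xs where xs: "ch n i [p0] j xs" "lderiv (GX n Mb Iv Pv p0) xs ss (map Tm w')"
      by blast
    from ch_single[OF xs(1)] xs(2) have "lderiv (GX n Mb Iv Pv p0) [Trip i p0 j] ss (map Tm w')" by simp
    from lderiv_suffix[OF lderiv_prefix[OF this, of "ol a1"], of "map Tm (ol a2)"]
    have d: "lderiv (GX n Mb Iv Pv p0) ([] @ (opt_tm a1 @ [Trip i p0 j] @ opt_tm a2) @ []) ss (map Tm w)"
      using m(6) by (simp add: opt_tm_ol)
    have g: "GX n Mb Iv Pv p0 X0 (opt_tm a1 @ [Trip i p0 j] @ opt_tm a2)"
      unfolding GX_def using m by blast
    from lderiv.step[OF g _ d] have "lderiv (GX n Mb Iv Pv p0) [X0] ss (map Tm w)" by simp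
    then show "w \<in> ?L" by blast
  qed
qed

lemma inf_nat_iff: "infinite S \<longleftrightarrow> (\<forall>m. \<exists>n\<ge>m. n \<in> S)"
  for S :: "nat set"
  using frequently_cofinite[of "\<lambda>x. x \<in> S"]
  by (simp add: cofinite_eq_sequentially frequently_def eventually_sequentially)

lemma concat_upt_append: "t \<le> t' \<Longrightarrow>
  concat (map ws [0..<t']) = concat (map ws [0..<t]) @ concat (map ws [t..<t'])"
  by (metis concat_append le_add_diff_inverse map_append upt_add_eq_append zero_le)

lemma upt_split3: "i \<le> j \<Longrightarrow> j \<le> k \<Longrightarrow> [i..<j] @ [j..<k] = [i..<k]"
  by (metis le_add_diff_inverse upt_add_eq_append)

lemma omega_concat_cofinal:
  assumes "\<And>t. \<exists>t'\<ge>t. map w [0..<length (concat (map ws [0..<t']))] = concat (map ws [0..<t'])"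
  shows "omega_concat ws w"
  unfolding omega_concat_def
proof
  fix t
  obtain t' where t': "t' \<ge> t" "map w [0..<length (concat (map ws [0..<t']))] = concat (map ws [0..<t'])"
    using assms by blast
  define P where "P = concat (map ws [0..<t])"
  define Q where "Q = concat (map ws [t..<t'])"
  have e: "concat (map ws [0..<t']) = P @ Q" unfolding P_def Q_def using concat_upt_append[OF t'(1)] .
  have "map w [0..<length P + length Q] = P @ Q" using t'(2) e by simp
  then have "take (length P) (map w [0..<length P + length Q]) = P" by simp
  then have "map w [0..<length P] = P" by (simp add: take_map)
  then show "map w [0..<length (concat (map ws [0..<t]))] = concat (map ws [0..<t])"
    unfolding P_def .
qed

lemma mono_B: "(\<And>m. B m < B (Suc m)) \<Longrightarrow> m \<le> m' \<Longrightarrow> B m \<le> (B m' :: nat)"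
  by (metis lift_Suc_mono_le order_less_imp_le)

lemma B_ge: "B 0 = 0 \<Longrightarrow> (\<And>m. B m < B (Suc m)) \<Longrightarrow> m \<le> (B m :: nat)"
proof (induction m)
  case 0 then show ?case by simp
next
  case (Suc m) then show ?case by (metis Suc_le_eq le_less_trans)
qed

lemma block_ex: "B 0 = 0 \<Longrightarrow> (\<And>m. B m < B (Suc m)) \<Longrightarrow> \<exists>m. B m \<le> t \<and> t < (B (Suc m) :: nat)"
proof (induction t)
  case 0 then show ?case by (metis le_refl)
next
  case (Suc t)
  then obtain m where m: "B m \<le> t" "t < B (Suc m)" by blast
  show ?case
  proof (cases "Suc t < B (Suc m)")
    case True then show ?thesis using m by (intro exI[of _ m]) auto
  next
    case False
    then have "Suc t = B (Suc m)" using m by simp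
    then show ?thesis using Suc.prems(2)[of "Suc m"] by (intro exI[of _ "Suc m"]) auto
  qed
qed

lemma block_unique: "(\<And>m. B m < B (Suc m)) \<Longrightarrow> B m \<le> t \<Longrightarrow> t < B (Suc m) \<Longrightarrow>
   B m' \<le> t \<Longrightarrow> t < (B (Suc m') :: nat) \<Longrightarrow> m = m'"
proof (rule ccontr)
  assume a: "\<And>m. B m < B (Suc m)" "B m \<le> t" "t < B (Suc m)" "B m' \<le> t" "t < B (Suc m')" "m \<noteq> m'"
  show False
  proof (cases "m < m'")
    case True then have "B (Suc m) \<le> B m'" using mono_B[of B "Suc m" m'] a(1) by auto
    then show False using a by simp
  next
    case False then have "B (Suc m') \<le> B m" using mono_B[of B "Suc m'" m] a(1,6) by auto
    then show False using a by simp
  qed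
qed

lemma fw_conc_map: "map (fw_conc u w) [0..<length u + k] = u @ map w [0..<k]"
  by (rule nth_equalityI) (auto simp: fw_conc_def nth_append)

lemma seg_concat:
  assumes "B 0 = 0" "\<And>m. B m < B (Suc m)" "\<And>m. V (Suc m) = concat (map X [B m..<B (Suc m)])"
  shows "concat (map V [0..<Suc m]) = V 0 @ concat (map X [0..<B m])"
proof (induction m)
  case 0 then show ?case using assms(1) by simp
next
  case (Suc m)
  have "concat (map V [0..<Suc (Suc m)]) = concat (map V [0..<Suc m]) @ V (Suc m)" by simp
  also have "\<dots> = V 0 @ concat (map X [0..<B m]) @ concat (map X [B m..<B (Suc m)])"
    using Suc assms(3) by simp
  also have "\<dots> = V 0 @ concat (map X [0..<B (Suc m)])"
    using concat_upt_append[of "B m" "B (Suc m)" X] assms(2)[of m] by simp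
  finally show ?case .
qed

lemma seg_omega:
  assumes "B 0 = 0" "\<And>m. B m < B (Suc m)" "\<And>m. V (Suc m) = concat (map X [B m..<B (Suc m)])"
  shows "omega_concat V (fw_conc (V 0) w) \<longleftrightarrow> omega_concat X w"
proof
  assume o: "omega_concat V (fw_conc (V 0) w)"
  show "omega_concat X w"
  proof (rule omega_concat_cofinal)
    fix t
    have e1: "concat (map V [0..<Suc t]) = V 0 @ concat (map X [0..<B t])" by (rule seg_concat[OF assms])
    have "map (fw_conc (V 0) w) [0..<length (concat (map V [0..<Suc t]))] = concat (map V [0..<Suc t])"
      using o unfolding omega_concat_def by blast
    then have "map (fw_conc (V 0) w) [0..<length (V 0) + length (concat (map X [0..<B t]))] = V 0 @ concat (map X [0..<B t])"
      unfolding e1 by (simp only: length_append)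
    then have "V 0 @ map w [0..<length (concat (map X [0..<B t]))] = V 0 @ concat (map X [0..<B t])"
      unfolding fw_conc_map .
    then show "\<exists>t'\<ge>t. map w [0..<length (concat (map X [0..<t']))] = concat (map X [0..<t'])"
      using B_ge[of B t] assms(1,2) by auto
  qed
next
  assume o: "omega_concat X w"
  show "omega_concat V (fw_conc (V 0) w)"
  proof (rule omega_concat_cofinal)
    fix t
    have "map w [0..<length (concat (map X [0..<B t]))] = concat (map X [0..<B t])"
      using o unfolding omega_concat_def by blast
    then have "map (fw_conc (V 0) w) [0..<length (concat (map V [0..<Suc t]))] = concat (map V [0..<Suc t])"
      unfolding seg_concat[OF assms, of t] length_append fw_conc_map by simp
    then show "\<exists>t'\<ge>t. map (fw_conc (V 0) w) [0..<length (concat (map V [0..<t']))] = concat (map V [0..<t'])"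
      by (intro exI[of _ "Suc t"]) auto
  qed
qed

lemma omega_concat_first: "omega_concat V W \<Longrightarrow> W = fw_conc (V 0) (\<lambda>k. W (k + length (V 0)))"
proof
  fix k
  assume o: "omega_concat V W"
  have "map W [0..<length (concat (map V [0..<1]))] = concat (map V [0..<1])"
    using o unfolding omega_concat_def by blast
  then have e: "map W [0..<length (V 0)] = V 0" by simp
  show "W k = fw_conc (V 0) (\<lambda>k. W (k + length (V 0))) k"
  proof (cases "k < length (V 0)")
    case True
    then have "W k = map W [0..<length (V 0)] ! k" by simp
    then show ?thesis using e True by (simp add: fw_conc_def)
  qed (simp add: fw_conc_def)
qed

lemma seg_infinite:
  assumes "B 0 = 0" "\<And>m. B m < B (Suc m)" "\<And>m. V (Suc m) = concat (map X [B m..<B (Suc m)])"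
  shows "infinite {m. V m \<noteq> []} \<longleftrightarrow> infinite {t. X t \<noteq> []}"
proof
  assume inf: "infinite {m. V m \<noteq> []}"
  show "infinite {t. X t \<noteq> []}"
    unfolding inf_nat_iff
  proof
    fix T
    obtain m where m: "m \<ge> Suc T" "V m \<noteq> []" using inf unfolding inf_nat_iff by blast
    then obtain m' where m': "m = Suc m'" "m' \<ge> T" by (cases m) auto
    then have "concat (map X [B m'..<B (Suc m')]) \<noteq> []" using m assms(3) by simp
    then obtain t where t: "t \<in> set [B m'..<B (Suc m')]" "X t \<noteq> []" by auto
    then have "t \<ge> B m'" by simp
    moreover have "B m' \<ge> m'" using B_ge[OF assms(1,2)] .
    ultimately show "\<exists>t\<ge>T. t \<in> {t. X t \<noteq> []}" using t(2) m'(2) by (intro exI[of _ t]) auto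
  qed
next
  assume inf: "infinite {t. X t \<noteq> []}"
  show "infinite {m. V m \<noteq> []}"
    unfolding inf_nat_iff
  proof
    fix T
    obtain t where t: "t \<ge> B T" "X t \<noteq> []" using inf unfolding inf_nat_iff by blast
    obtain m where m: "B m \<le> t" "t < B (Suc m)" using block_ex[OF assms(1,2)] by blast
    have "m \<ge> T"
    proof (rule ccontr)
      assume "\<not> T \<le> m"
      then have "B (Suc m) \<le> B T" using mono_B[of B "Suc m" T] assms(2) by auto
      then show False using t m by simp
    qed
    moreover have "V (Suc m) \<noteq> []" using assms(3) m t(2) by auto
    ultimately show "\<exists>m'\<ge>T. m' \<in> {m. V m \<noteq> []}" by (intro exI[of _ "Suc m"]) auto
  qed
qed

lemma seg_states:
  assumes "B 0 = 0" "\<And>m. B m < B (Suc m)" "G 0 = [S 0]"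
    "\<And>m. G (Suc m) = map S [Suc (B m)..<B (Suc m)] @ [S (B (Suc m))]"
  shows "omega_concat G js \<longleftrightarrow> js = S"
proof -
  have c: "concat (map G [0..<Suc m]) = map S [0..<Suc (B m)]" for m
  proof (induction m)
    case 0 then show ?case using assms(1,3) by simp
  next
    case (Suc m)
    have "concat (map G [0..<Suc (Suc m)]) = concat (map G [0..<Suc m]) @ G (Suc m)" by simp
    also have "\<dots> = map S ([0..<Suc (B m)] @ [Suc (B m)..<B (Suc m)]) @ [S (B (Suc m))]"
      using Suc assms(4) by simp
    also have "\<dots> = map S [0..<Suc (B (Suc m))]"
      using upt_split3[of 0 "Suc (B m)" "B (Suc m)"] assms(2)[of m] by simp
    finally show ?case .
  qed
  show ?thesis
  proof
    assume o: "omega_concat G js"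
    show "js = S"
    proof
      fix t
      have "map js [0..<length (concat (map G [0..<Suc t]))] = concat (map G [0..<Suc t])"
        using o unfolding omega_concat_def by blast
      then have e: "map js [0..<Suc (B t)] = map S [0..<Suc (B t)]" unfolding c by simp
      have "t < Suc (B t)" using B_ge[OF assms(1,2), of t] by simp
      then show "js t = S t" using e by (metis add_0 diff_zero nth_map_upt)
    qed
  next
    assume "js = S"
    show "omega_concat G js"
    proof (rule omega_concat_cofinal)
      fix t
      have "map js [0..<length (concat (map G [0..<Suc t]))] = concat (map G [0..<Suc t])"
        unfolding c \<open>js = S\<close> by simp
      then show "\<exists>t'\<ge>t. map js [0..<length (concat (map G [0..<t']))] = concat (map G [0..<t'])"
        by (intro exI[of _ "Suc t"]) simp
    qed
  qed
qed

lemma Pl_shift: "js 0 \<in> {1..n} \<Longrightarrow> js \<in> Pl n l \<longleftrightarrow> (\<lambda>t. js (Suc t)) \<in> Pl n l"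
proof -
  assume j0: "js 0 \<in> {1..n}"
  have r: "(\<forall>t. js t \<in> {1..n}) \<longleftrightarrow> (\<forall>t. js (Suc t) \<in> {1..n})"
    using j0 by (metis not0_implies_Suc)
  have i: "infinite {t. js t \<le> l} \<longleftrightarrow> infinite {t. js (Suc t) \<le> l}"
    unfolding inf_nat_iff
  proof
    assume a: "\<forall>m. \<exists>n\<ge>m. n \<in> {t. js t \<le> l}"
    show "\<forall>m. \<exists>n\<ge>m. n \<in> {t. js (Suc t) \<le> l}"
    proof
      fix m
      obtain k where "k \<ge> Suc m" "js k \<le> l" using a by blast
      then show "\<exists>n\<ge>m. n \<in> {t. js (Suc t) \<le> l}" by (intro exI[of _ "k - 1"]) auto
    qed
  next
    assume a: "\<forall>m. \<exists>n\<ge>m. n \<in> {t. js (Suc t) \<le> l}"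
    show "\<forall>m. \<exists>n\<ge>m. n \<in> {t. js t \<le> l}"
    proof
      fix m
      obtain k where "k \<ge> m" "js (Suc k) \<le> l" using a by blast
      then show "\<exists>n\<ge>m. n \<in> {t. js t \<le> l}" by (intro exI[of _ "Suc k"]) auto
    qed
  qed
  show ?thesis unfolding Pl_def using r i by auto
qed

lemma run_fun: "run n Mb \<pi> i w ss \<pi>' j \<Longrightarrow> \<exists>P S X. P 0 = \<pi> \<and> S 0 = i \<and> P (length ss) = \<pi>' \<and>
   S (length ss) = j \<and>
   (\<forall>t<length ss. X t \<in> pd_mat n Mb (P t) (S t) (P (Suc t)) (S (Suc t))) \<and>
   w = concat (map X [0..<length ss]) \<and> ss = map S [0..<length ss]"
proof (induction rule: run.induct)
  case (rrefl i \<pi>)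
  show ?case by (intro exI[of _ "\<lambda>_. \<pi>"] exI[of _ "\<lambda>_. i"]) simp
next
  case (rstep a p ps i k \<pi>' w ss \<pi>2 j)
  then obtain P S X where IH: "P 0 = ps @ \<pi>'" "S 0 = k" "P (length ss) = \<pi>2" "S (length ss) = j"
    "\<forall>t<length ss. X t \<in> pd_mat n Mb (P t) (S t) (P (Suc t)) (S (Suc t))"
    "w = concat (map X [0..<length ss])" "ss = map S [0..<length ss]" by blast
  define P' where "P' = case_nat (p # \<pi>') P"
  define S' where "S' = case_nat i S"
  define X' where "X' = case_nat (ol a) X"
  have "\<forall>t<length (i # ss). X' t \<in> pd_mat n Mb (P' t) (S' t) (P' (Suc t)) (S' (Suc t))"
  proof (intro allI impI)
    fix t assume t: "t < length (i # ss)"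
    show "X' t \<in> pd_mat n Mb (P' t) (S' t) (P' (Suc t)) (S' (Suc t))"
    proof (cases t)
      case 0 then show ?thesis using rstep.hyps IH(1,2) unfolding P'_def S'_def X'_def
        by (auto simp: pd_mat_iff)
    next
      case (Suc t') then show ?thesis using IH(5) t unfolding P'_def S'_def X'_def by simp
    qed
  qed
  moreover have "ol a @ w = concat (map X' [0..<length (i # ss)])"
    using IH(6) unfolding X'_def by (simp add: map_upt_Suc del: upt_Suc)
  moreover have "i # ss = map S' [0..<length (i # ss)]"
    using IH(7) unfolding S'_def by (simp add: map_upt_Suc del: upt_Suc)
  ultimately show ?case using IH(3,4) unfolding P'_def S'_def
    by (intro exI[of _ P'] exI[of _ S'] exI[of _ X']) (simp add: P'_def S'_def)
qed

lemma map_upt_shift: "map f [a..<a + k] = map (\<lambda>d. f (a + d)) [0..<k]"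
  by (rule nth_equalityI) auto

lemma inf_run:
  assumes runs: "\<And>m. run n Mb (C m) (Q m) (W m) (SS m) (C (Suc m)) (Q (Suc m))"
    and ne: "\<And>m. SS m \<noteq> []"
  shows "\<exists>\<pi>s js X B. B 0 = 0 \<and> (\<forall>m. B m < B (Suc m)) \<and> \<pi>s 0 = C 0 \<and> js 0 = Q 0 \<and>
   (\<forall>t. X t \<in> pd_mat n Mb (\<pi>s t) (js t) (\<pi>s (Suc t)) (js (Suc t))) \<and>
   (\<forall>m. W m = concat (map X [B m..<B (Suc m)])) \<and> (\<forall>m. SS m = map js [B m..<B (Suc m)]) \<and>
   (\<forall>m. js (B m) = Q m)"
proof -
  have "\<forall>m. \<exists>P S X. P 0 = C m \<and> S 0 = Q m \<and> P (length (SS m)) = C (Suc m) \<and>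
   S (length (SS m)) = Q (Suc m) \<and>
   (\<forall>t<length (SS m). X t \<in> pd_mat n Mb (P t) (S t) (P (Suc t)) (S (Suc t))) \<and>
   W m = concat (map X [0..<length (SS m)]) \<and> SS m = map S [0..<length (SS m)]"
    using run_fun[OF runs] by blast
  then obtain P S Xf where F: "\<And>m. P m 0 = C m \<and> S m 0 = Q m \<and> P m (length (SS m)) = C (Suc m) \<and>
   S m (length (SS m)) = Q (Suc m) \<and>
   (\<forall>t<length (SS m). Xf m t \<in> pd_mat n Mb (P m t) (S m t) (P m (Suc t)) (S m (Suc t))) \<and>
   W m = concat (map (Xf m) [0..<length (SS m)]) \<and> SS m = map (S m) [0..<length (SS m)]"
    by metis
  define L where "L m = length (SS m)" for m
  have Lpos: "L m > 0" for m using ne[of m] unfolding L_def by simp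
  define B where "B m = (\<Sum>j<m. L j)" for m
  have B0: "B 0 = 0" unfolding B_def by simp
  have BS: "B (Suc m) = B m + L m" for m unfolding B_def by simp
  have Bmono: "\<And>m. B m < B (Suc m)" using BS Lpos by (simp add: add_pos_pos)
  define blk where "blk t = (LEAST m. t < B (Suc m))" for t
  have blk: "blk t = m" if "B m \<le> t" "t < B (Suc m)" for t m
    unfolding blk_def
  proof (rule Least_equality)
    show "t < B (Suc m)" by fact
  next
    fix m' assume "t < B (Suc m')"
    show "m \<le> m'"
    proof (rule ccontr)
      assume "\<not> m \<le> m'"
      then have "B (Suc m') \<le> B m" using mono_B[of B "Suc m'" m] Bmono by auto
      then show False using that \<open>t < B (Suc m')\<close> by simp
    qed
  qed
  define \<pi>s where "\<pi>s t = P (blk t) (t - B (blk t))" for t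
  define js where "js t = S (blk t) (t - B (blk t))" for t
  define X where "X t = Xf (blk t) (t - B (blk t))" for t
  have at: "\<pi>s t = P m (t - B m) \<and> js t = S m (t - B m) \<and> X t = Xf m (t - B m)"
    if "B m \<le> t" "t < B (Suc m)" for t m
    using blk[OF that] unfolding \<pi>s_def js_def X_def by simp
  have at0: "\<pi>s (B m) = C m \<and> js (B m) = Q m" for m
    using at[of m "B m"] Bmono[of m] F[of m] by simp
  have step: "X t \<in> pd_mat n Mb (\<pi>s t) (js t) (\<pi>s (Suc t)) (js (Suc t))" for t
  proof -
    obtain m where m: "B m \<le> t" "t < B (Suc m)" using block_ex[of B t, OF B0 Bmono] by blast
    define d where "d = t - B m"
    have d: "d < L m" "t = B m + d" using m BS unfolding d_def by auto
    have "\<pi>s (Suc t) = P m (Suc d) \<and> js (Suc t) = S m (Suc d)"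
    proof (cases "Suc t < B (Suc m)")
      case True then show ?thesis using at[of m "Suc t"] m d by simp
    next
      case False
      then have e: "Suc t = B (Suc m)" "Suc d = L m" using m d BS by auto
      then show ?thesis using at0[of "Suc m"] F[of m] unfolding L_def by simp
    qed
    moreover have "X t = Xf m d" "\<pi>s t = P m d" "js t = S m d" using at[OF m] unfolding d_def by auto
    ultimately show ?thesis using F[of m] d unfolding L_def by auto
  qed
  have Wm: "W m = concat (map X [B m..<B (Suc m)])" for m
  proof -
    have "map X [B m..<B (Suc m)] = map (\<lambda>d. X (B m + d)) [0..<L m]"
      unfolding BS by (rule map_upt_shift)
    also have "\<dots> = map (Xf m) [0..<L m]"
      using at[of m] BS by (intro map_cong) auto
    finally show ?thesis using F[of m] unfolding L_def by simp
  qed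
  have SSm: "SS m = map js [B m..<B (Suc m)]" for m
  proof -
    have "map js [B m..<B (Suc m)] = map (\<lambda>d. js (B m + d)) [0..<L m]"
      unfolding BS by (rule map_upt_shift)
    also have "\<dots> = map (S m) [0..<L m]"
      using at[of m] BS by (intro map_cong) auto
    finally show ?thesis using F[of m] unfolding L_def by simp
  qed
  show ?thesis
    apply (rule exI[of _ \<pi>s], rule exI[of _ js], rule exI[of _ X], rule exI[of _ B])
    using B0 Bmono at0[of 0] step Wm SSm at0 by simp
qed

lemma spine:
  fixes X :: "nat \<Rightarrow> 'a list" and \<pi>s :: "nat \<Rightarrow> 'g list"
  assumes X: "\<And>t. X t \<in> pd_mat n Mb (\<pi>s t) (js t) (\<pi>s (Suc t)) (js (Suc t))" and p0: "\<pi>s 0 = [p0]"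
  shows "\<exists>B. B 0 = 0 \<and> (\<forall>m. B m < B (Suc m)) \<and>
    (\<forall>m. \<exists>a xs. GZ n Mb Iv p0 (Zp (js (B m)) (hd (\<pi>s (B m))))
                  (opt_tm a @ xs @ [Zp (js (B (Suc m))) (hd (\<pi>s (B (Suc m))))]) \<and>
              lderiv (GX n Mb Iv Pv p0) (opt_tm a @ xs) (map js [Suc (B m)..<B (Suc m)])
                 (map Tm (concat (map X [B m..<B (Suc m)]))))"
proof -
  have "\<forall>t. \<exists>a ps. a \<in> Mb (hd (\<pi>s t)) ps (js t) (js (Suc t)) \<and> \<pi>s t \<noteq> [] \<and>
     \<pi>s (Suc t) = ps @ tl (\<pi>s t) \<and> X t = ol a \<and> js t \<in> {1..n} \<and> js (Suc t) \<in> {1..n}"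
  proof
    fix t
    from X[of t] obtain p \<pi>' ps a where "js t \<in> {1..n}" "js (Suc t) \<in> {1..n}" "\<pi>s t = p # \<pi>'"
      "\<pi>s (Suc t) = ps @ \<pi>'" "a \<in> Mb p ps (js t) (js (Suc t))" "X t = ol a"
      by (auto simp: pd_mat_iff)
    then show "\<exists>a ps. a \<in> Mb (hd (\<pi>s t)) ps (js t) (js (Suc t)) \<and> \<pi>s t \<noteq> [] \<and>
     \<pi>s (Suc t) = ps @ tl (\<pi>s t) \<and> X t = ol a \<and> js t \<in> {1..n} \<and> js (Suc t) \<in> {1..n}"
      by auto
  qed
  then obtain AA PS where T: "\<And>t. AA t \<in> Mb (hd (\<pi>s t)) (PS t) (js t) (js (Suc t)) \<and> \<pi>s t \<noteq> [] \<and>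
     \<pi>s (Suc t) = PS t @ tl (\<pi>s t) \<and> X t = ol (AA t) \<and> js t \<in> {1..n} \<and> js (Suc t) \<in> {1..n}"
    by metis
  define h where "h t = length (\<pi>s t)" for t
  have h1: "h t \<ge> 1" for t using T[of t] unfolding h_def by (cases "\<pi>s t") auto
  define sp where "sp t \<longleftrightarrow> (\<forall>t'\<ge>t. h t \<le> h t')" for t
  have minpt: "\<exists>s1\<ge>s. sp s1 \<and> (\<forall>r. s \<le> r \<longrightarrow> r < s1 \<longrightarrow> h s1 < h r)" for s
  proof -
    define v where "v = (LEAST v. \<exists>r\<ge>s. h r = v)"
    have v: "\<exists>r\<ge>s. h r = v" unfolding v_def by (rule LeastI_ex) auto
    have vle: "v \<le> h r" if "r \<ge> s" for r unfolding v_def using that by (auto intro: Least_le)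
    define s1 where "s1 = (LEAST r. s \<le> r \<and> h r = v)"
    have s1: "s \<le> s1 \<and> h s1 = v" unfolding s1_def using v by (metis (mono_tags, lifting) LeastI_ex)
    have "sp s1" unfolding sp_def using s1 vle by auto
    moreover have "h s1 < h r" if "s \<le> r" "r < s1" for r
    proof -
      have "h r \<noteq> v" using that not_less_Least[of r "\<lambda>r. s \<le> r \<and> h r = v"] unfolding s1_def by auto
      then show ?thesis using vle[OF that(1)] s1 by auto
    qed
    ultimately show ?thesis using s1 by auto
  qed
  have sp0: "sp 0" unfolding sp_def using p0 h1 by (auto simp: h_def)
  have exsp: "\<exists>s. b < s \<and> sp s" for b using minpt[of "Suc b"] Suc_le_eq by blast
  define B where "B = rec_nat 0 (\<lambda>_ b. LEAST s. b < s \<and> sp s)"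
  have B0: "B 0 = 0" unfolding B_def by simp
  have BS: "B (Suc m) = (LEAST s. B m < s \<and> sp s)" for m unfolding B_def by simp
  have BS1: "B m < B (Suc m) \<and> sp (B (Suc m))" for m unfolding BS by (rule LeastI_ex[OF exsp])
  have spB: "sp (B m)" for m by (cases m) (auto simp: B0 sp0 BS1)
  have nosp: "\<not> sp s" if "B m < s" "s < B (Suc m)" for m s
    using not_less_Least[of s "\<lambda>s. B m < s \<and> sp s"] that unfolding BS by auto
  have main: "\<exists>a xs. GZ n Mb Iv p0 (Zp (js (B m)) (hd (\<pi>s (B m))))
                  (opt_tm a @ xs @ [Zp (js (B (Suc m))) (hd (\<pi>s (B (Suc m))))]) \<and>
              lderiv (GX n Mb Iv Pv p0) (opt_tm a @ xs) (map js [Suc (B m)..<B (Suc m)])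
                 (map Tm (concat (map X [B m..<B (Suc m)])))" for m
  proof -
    define t where "t = B m"
    define t' where "t' = B (Suc m)"
    have tt: "t < t'" "sp t" "sp t'" using BS1 spB unfolding t_def t'_def by auto
    have low: "h t' < h s" if "t < s" "s < t'" for s
    proof -
      obtain s1 where s1: "s1 \<ge> s" "sp s1" "\<forall>r. s \<le> r \<longrightarrow> r < s1 \<longrightarrow> h s1 < h r"
        using minpt by blast
      have "s1 = t'"
      proof (rule ccontr)
        assume "s1 \<noteq> t'"
        then consider "s1 < t'" | "s1 > t'" by linarith
        then show False
        proof cases
          case 1 then show False using nosp[of m s1] s1 that unfolding t_def t'_def by auto
        next
          case 2 then have "h s1 < h t'" using s1(3) that by auto
          moreover have "h t' \<le> h s1" using tt(3) 2 unfolding sp_def by auto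
          ultimately show False by simp
        qed
      qed
      then show ?thesis using s1(3) that by auto
    qed
    define d where "d s = h s - h t'" for s
    have dS: "d s = Suc (length (tl (\<pi>s s)) - h t') \<and>
        d (Suc s) = length (PS s) + (length (tl (\<pi>s s)) - h t')" if "h t' < h s" for s
      using T[of s] that unfolding d_def h_def by (cases "\<pi>s s") auto
    have dropeq: "drop (d s) (\<pi>s s) = drop (d (Suc s)) (\<pi>s (Suc s))" if "h t' < h s" for s
      using dS[OF that] T[of s] by (cases "\<pi>s s") auto
    have takeeq: "\<exists>\<gamma>. take (d s) (\<pi>s s) = hd (\<pi>s s) # \<gamma> \<and> take (d (Suc s)) (\<pi>s (Suc s)) = PS s @ \<gamma>"
      if "h t' < h s" for s
      using dS[OF that] T[of s] by (cases "\<pi>s s") auto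
    have dropall: "drop (d s) (\<pi>s s) = \<pi>s t'" if "Suc t \<le> s" "s \<le> t'" for s
      using that(2)
    proof (induction rule: inc_induct)
      case base show ?case by (simp add: d_def)
    next
      case (step k)
      have "h t' < h k" using low[of k] step.hyps that(1) by auto
      then show ?case using dropeq step.IH by simp
    qed
    have runall: "run n Mb (take (d s) (\<pi>s s)) (js s) (concat (map X [s..<t'])) (map js [s..<t']) [] (js t')"
      if "Suc t \<le> s" "s \<le> t'" for s
      using that(2)
    proof (induction rule: inc_induct)
      case base show ?case using T[of t'] by (simp add: d_def rrefl)
    next
      case (step k)
      have "h t' < h k" using low[of k] step.hyps that(1) by auto
      then obtain \<gamma> where g: "take (d k) (\<pi>s k) = hd (\<pi>s k) # \<gamma>"
        "take (d (Suc k)) (\<pi>s (Suc k)) = PS k @ \<gamma>" using takeeq by blast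
      have "run n Mb (hd (\<pi>s k) # \<gamma>) (js k) (ol (AA k) @ concat (map X [Suc k..<t']))
              (js k # map js [Suc k..<t']) [] (js t')"
        using T[of k] step.IH g(2) by (intro rstep) auto
      moreover have "[k..<t'] = k # [Suc k..<t']" using step.hyps(2) by (rule upt_conv_Cons)
      ultimately show ?case using g(1) T[of k] by simp
    qed
    define ps where "ps = PS t"
    define \<rho> where "\<rho> = tl (\<pi>s t)"
    define a where "a = AA t"
    have pt: "\<pi>s t = hd (\<pi>s t) # \<rho>" "\<pi>s (Suc t) = ps @ \<rho>" unfolding \<rho>_def ps_def using T[of t] by auto
    have hsuc: "h t' \<le> h (Suc t)"
    proof (cases "Suc t = t'")
      case False then show ?thesis using low[of "Suc t"] tt(1) by simp
    qed simp
    have htt: "h t \<le> h t'" using tt unfolding sp_def by simp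
    have ht: "h t = Suc (length \<rho>)" "h (Suc t) = length ps + length \<rho>"
      unfolding h_def using pt by (metis length_Cons, simp)
    define k0 where "k0 = d (Suc t)"
    have k0: "k0 < length ps" "k0 = length ps + length \<rho> - h t'"
      using hsuc htt ht unfolding k0_def d_def by auto
    have tk: "take k0 (\<pi>s (Suc t)) = take k0 ps" using pt(2) k0(1) by simp
    have dt: "\<pi>s t' = drop k0 ps @ \<rho>"
      using dropall[of "Suc t"] tt(1) pt(2) k0(1) unfolding k0_def by simp
    have hdt: "hd (\<pi>s t') = ps ! k0" using dt k0(1) by (simp add: hd_drop_conv_nth)
    have r: "run n Mb (take k0 ps) (js (Suc t)) (concat (map X [Suc t..<t'])) (map js [Suc t..<t']) [] (js t')"
      using runall[of "Suc t"] tt(1) tk unfolding k0_def by simp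
    from bwd[OF r HOL.refl] obtain xs where
      xs: "ch n (js (Suc t)) (take k0 ps) (js t') xs"
          "lderiv (GX n Mb Iv Pv p0) xs (map js [Suc t..<t']) (map Tm (concat (map X [Suc t..<t'])))"
      by blast
    from ch_trips_inv[OF xs(1)] obtain L where L: "length L = Suc k0" "L ! 0 = js (Suc t)"
      "L ! k0 = js t'" "set L \<subseteq> {1..n}"
      "xs = map (\<lambda>r. Trip (L!r) (take k0 ps ! r) (L!Suc r)) [0..<k0]"
      using k0(1) by auto
    have xs': "xs = map (\<lambda>r. Trip (L!r) (ps ! r) (L!Suc r)) [0..<k0]"
      unfolding L(5) by (rule map_cong) auto
    have gz: "GZ n Mb Iv p0 (Zp (js t) (hd (\<pi>s t))) (opt_tm a @ xs @ [Zp (js t') (hd (\<pi>s t'))])"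
      unfolding GZ_def
      apply (rule disjI2)
      apply (rule exI[of _ "js t"], rule exI[of _ "hd (\<pi>s t)"], rule exI[of _ ps], rule exI[of _ L],
             rule exI[of _ "Suc k0"], rule exI[of _ a])
      using T[of t] L k0(1) xs' hdt unfolding a_def ps_def by auto
    have "concat (map X [t..<t']) = ol a @ concat (map X [Suc t..<t'])"
      using tt(1) T[of t] unfolding a_def by (simp add: upt_conv_Cons)
    then have ld: "lderiv (GX n Mb Iv Pv p0) (opt_tm a @ xs) (map js [Suc t..<t'])
                 (map Tm (concat (map X [t..<t'])))"
      using lderiv_prefix[OF xs(2), of "ol a"] by (simp add: opt_tm_ol)
    show ?thesis using gz ld unfolding t_def t'_def by blast
  qed
  show ?thesis using B0 BS1 main by blast
qed

lemma choice4: "\<forall>m. \<exists>a b c d. P m a b c d \<Longrightarrow> \<exists>A B C D. \<forall>m. P m (A m) (B m) (C m) (D m)"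
  by metis

lemma run_nil: "run n Mb \<gamma> i w ss \<pi> j \<Longrightarrow> \<gamma> = [] \<Longrightarrow> w = [] \<and> ss = []"
  by (induction rule: run.induct) auto

lemma run_suffix: "run n Mb \<gamma> i w ss \<gamma>' j \<Longrightarrow> run n Mb (\<gamma> @ \<delta>) i w ss (\<gamma>' @ \<delta>) j"
proof (induction rule: run.induct)
  case (rrefl i \<pi>) then show ?case by (rule run.rrefl)
next
  case (rstep a p ps i k \<pi>' w ss \<pi>2 j)
  have "run n Mb (ps @ (\<pi>' @ \<delta>)) k w ss (\<pi>2 @ \<delta>) j" using rstep.IH by simp
  from run.rstep[OF rstep.hyps(1-3) this] show ?case by simp
qed

lemma omega_sub1:
  fixes Mb :: "'g \<Rightarrow> 'g list \<Rightarrow> nat \<Rightarrow> nat \<Rightarrow> 'a option set"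
  assumes z0: "GZ n Mb Iv p0 Z0 (\<alpha> 0 @ [Zp (iz 0) (q 0)])"
    and zs: "\<And>m. GZ n Mb Iv p0 (Zp (iz m) (q m)) (\<alpha> (Suc m) @ [Zp (iz (Suc m)) (q (Suc m))])"
    and ld: "\<And>m. lderiv (GX n Mb Iv Pv p0) (\<alpha> m) (is m) (map Tm (ws m))"
    and inf: "infinite {m. ws m \<noteq> []}" and oc: "omega_concat ws W"
    and jsg: "omega_concat (\<lambda>m. case m of 0 \<Rightarrow> [iz 0] | Suc k \<Rightarrow> is (Suc k) @ [iz (Suc k)]) jsg"
       "jsg \<in> Pl n l"
  shows "W \<in> (\<Union>i\<in>{1..n}. {fw_conc u w | u w. u \<in> sym_lang (Iv i) \<and>
                          w \<in> mat_omega n l (pd_mat n Mb) [p0] i})"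
proof -
  from z0 obtain a0 where a0: "iz 0 \<in> {1..n}" "a0 \<in> Iv (iz 0)" "\<alpha> 0 = opt_tm a0" "q 0 = p0"
    unfolding GZ_def by auto
  have ex4: "\<forall>m. \<exists>ps ms jj a. iz m \<in> {1..n} \<and> 1 \<le> jj \<and> jj \<le> length ps \<and> length ms = jj \<and>
     set ms \<subseteq> {1..n} \<and> a \<in> Mb (q m) ps (iz m) (ms ! 0) \<and>
     \<alpha> (Suc m) = opt_tm a @ map (\<lambda>t. Trip (ms ! t) (ps ! t) (ms ! Suc t)) [0..<jj - 1] \<and>
     iz (Suc m) = ms ! (jj - 1) \<and> q (Suc m) = ps ! (jj - 1)"
  proof
    fix m
    have "\<exists>ps ms jj a. iz m \<in> {1..n} \<and> 1 \<le> jj \<and> jj \<le> length ps \<and> length ms = jj \<and>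
      set ms \<subseteq> {1..n} \<and> a \<in> Mb (q m) ps (iz m) (ms ! 0) \<and>
      \<alpha> (Suc m) @ [Zp (iz (Suc m)) (q (Suc m))] = opt_tm a @ map (\<lambda>t. Trip (ms ! t) (ps ! t) (ms ! Suc t)) [0..<jj - 1]
              @ [Zp (ms ! (jj - 1)) (ps ! (jj - 1))]"
      using zs[of m] unfolding GZ_def
      apply (simp only: gsym.inject gsym.distinct simp_thms)
      apply (elim exE conjE)
      apply hypsubst
      apply blast
      done
    then obtain ps ms jj a where g: "iz m \<in> {1..n}" "1 \<le> jj" "jj \<le> length ps" "length ms = jj"
      "set ms \<subseteq> {1..n}" "a \<in> Mb (q m) ps (iz m) (ms ! 0)"
      "\<alpha> (Suc m) @ [Zp (iz (Suc m)) (q (Suc m))] = opt_tm a @ map (\<lambda>t. Trip (ms ! t) (ps ! t) (ms ! Suc t)) [0..<jj - 1]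
              @ [Zp (ms ! (jj - 1)) (ps ! (jj - 1))]"
      by blast
    from g(7) have "\<alpha> (Suc m) @ [Zp (iz (Suc m)) (q (Suc m))] = (opt_tm a @ map (\<lambda>t. Trip (ms ! t) (ps ! t) (ms ! Suc t)) [0..<jj - 1])
              @ [Zp (ms ! (jj - 1)) (ps ! (jj - 1))]" by simp
    then have "\<alpha> (Suc m) = opt_tm a @ map (\<lambda>t. Trip (ms ! t) (ps ! t) (ms ! Suc t)) [0..<jj - 1]"
      "iz (Suc m) = ms ! (jj - 1)" "q (Suc m) = ps ! (jj - 1)" unfolding append1_eq_conv by auto
    then show "\<exists>ps ms jj a. iz m \<in> {1..n} \<and> 1 \<le> jj \<and> jj \<le> length ps \<and> length ms = jj \<and>
     set ms \<subseteq> {1..n} \<and> a \<in> Mb (q m) ps (iz m) (ms ! 0) \<and>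
     \<alpha> (Suc m) = opt_tm a @ map (\<lambda>t. Trip (ms ! t) (ps ! t) (ms ! Suc t)) [0..<jj - 1] \<and>
     iz (Suc m) = ms ! (jj - 1) \<and> q (Suc m) = ps ! (jj - 1)" using g by blast
  qed
  obtain PS MS JJ AA where Z: "\<And>m. iz m \<in> {1..n} \<and> 1 \<le> JJ m \<and> JJ m \<le> length (PS m) \<and>
     length (MS m) = JJ m \<and> set (MS m) \<subseteq> {1..n} \<and> AA m \<in> Mb (q m) (PS m) (iz m) (MS m ! 0) \<and>
     \<alpha> (Suc m) = opt_tm (AA m) @ map (\<lambda>t. Trip (MS m ! t) (PS m ! t) (MS m ! Suc t)) [0..<JJ m - 1] \<and>
     iz (Suc m) = MS m ! (JJ m - 1) \<and> q (Suc m) = PS m ! (JJ m - 1)"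
    using choice4[OF ex4] by blast
  have seg: "\<exists>w''. ws (Suc m) = ol (AA m) @ w'' \<and>
      run n Mb (take (JJ m - 1) (PS m)) (MS m ! 0) w'' (is (Suc m)) [] (iz (Suc m))" for m
  proof -
    have c: "ch n (MS m ! 0) (take (JJ m - 1) (PS m)) (MS m ! (JJ m - 1))
        (map (\<lambda>t. Trip (MS m ! t) (PS m ! t) (MS m ! Suc t)) [0..<JJ m - 1])"
      by (rule ch_trips) (use Z[of m] in auto)
    have e: "\<alpha> (Suc m) = map Tm (ol (AA m)) @ map (\<lambda>t. Trip (MS m ! t) (PS m ! t) (MS m ! Suc t)) [0..<JJ m - 1] @ map Tm []"
      using Z[of m] by (simp add: opt_tm_ol)
    from fwd[OF ld[of "Suc m"] HOL.refl e c] show ?thesis using Z[of m] by auto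
  qed
  have ws0: "ws 0 = ol a0"
  proof -
    have c: "ch n (iz 0) [] (iz 0) []" using a0(1) by (rule chn)
    have e: "\<alpha> 0 = map Tm (ol a0) @ [] @ map Tm []" using a0(3) by (simp add: opt_tm_ol)
    from fwd[OF ld[of 0] HOL.refl e c] obtain w' where "ws 0 = ol a0 @ w' @ []" "run n Mb [] (iz 0) w' (is 0) [] (iz 0)"
      by blast
    then show ?thesis using run_nil by fastforce
  qed
  define st where "st = rec_nat [p0] (\<lambda>m s. drop (JJ m - 1) (PS m) @ tl s)"
  have st0: "st 0 = [p0]" and stS: "st (Suc m) = drop (JJ m - 1) (PS m) @ tl (st m)" for m
    unfolding st_def by simp_all
  have sthd: "st m = q m # tl (st m)" for m
  proof (cases m)
    case 0 then show ?thesis using st0 a0(4) by simp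
  next
    case (Suc m')
    have jj: "1 \<le> JJ m'" "JJ m' \<le> length (PS m')" using Z[of m'] by blast+
    then have "JJ m' - 1 < length (PS m')" by simp
    from Cons_nth_drop_Suc[OF this] jj(1)
    have "drop (JJ m' - 1) (PS m') = PS m' ! (JJ m' - 1) # drop (JJ m') (PS m')"
      by simp
    then show ?thesis using Suc stS[of m'] Z[of m'] by simp
  qed
  have runs: "run n Mb (st m) (iz m) (ws (Suc m)) (iz m # is (Suc m)) (st (Suc m)) (iz (Suc m))" for m
  proof -
    obtain w'' where w'': "ws (Suc m) = ol (AA m) @ w''"
      "run n Mb (take (JJ m - 1) (PS m)) (MS m ! 0) w'' (is (Suc m)) [] (iz (Suc m))" using seg by blast
    have r: "run n Mb (PS m @ tl (st m)) (MS m ! 0) w'' (is (Suc m)) (st (Suc m)) (iz (Suc m))"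
      using run_suffix[OF w''(2), of "drop (JJ m - 1) (PS m) @ tl (st m)"] stS[of m]
      by (metis append.assoc append_Nil append_take_drop_id)
    have m0: "MS m ! 0 \<in> {1..n}" using Z[of m] by (metis gr0I le_zero_eq nth_mem subsetD zero_neq_one length_0_conv)
    have "run n Mb (q m # tl (st m)) (iz m) (ol (AA m) @ w'') (iz m # is (Suc m)) (st (Suc m)) (iz (Suc m))"
      by (rule rstep[OF _ _ m0 r]) (use Z[of m] in auto)
    then show ?thesis using sthd[of m] w''(1) by simp
  qed
  obtain \<pi>s js X B where R: "B 0 = 0" "\<forall>m. B m < B (Suc m)" "\<pi>s 0 = st 0" "js 0 = iz 0"
    "\<forall>t. X t \<in> pd_mat n Mb (\<pi>s t) (js t) (\<pi>s (Suc t)) (js (Suc t))"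
    "\<forall>m. ws (Suc m) = concat (map X [B m..<B (Suc m)])" "\<forall>m. iz m # is (Suc m) = map js [B m..<B (Suc m)]"
    "\<forall>m. js (B m) = iz m"
    using inf_run[of n Mb st iz "\<lambda>m. ws (Suc m)" "\<lambda>m. iz m # is (Suc m)", OF runs] by blast
  have Bm: "\<And>m. B m < B (Suc m)" using R(2) by blast
  have isS: "is (Suc m) = map js [Suc (B m)..<B (Suc m)]" for m
  proof -
    have "[B m..<B (Suc m)] = B m # [Suc (B m)..<B (Suc m)]" using Bm[of m] by (rule upt_conv_Cons)
    then show ?thesis using R(7) by (metis list.inject list.simps(9))
  qed
  define w where "w k = W (k + length (ws 0))" for k
  have Wf: "W = fw_conc (ws 0) w" unfolding w_def by (rule omega_concat_first[OF oc])
  have ocX: "omega_concat X w"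
    using seg_omega[of B ws X w, OF R(1) Bm] R(6) oc Wf by simp
  have infX: "infinite {t. X t \<noteq> []}"
    using seg_infinite[of B ws X, OF R(1) Bm] R(6) inf by simp
  have jseq: "jsg = js"
    using seg_states[of B "\<lambda>m. case m of 0 \<Rightarrow> [iz 0] | Suc k \<Rightarrow> is (Suc k) @ [iz (Suc k)]" js jsg, OF R(1) Bm]
      jsg(1) R(4,8) isS by simp
  have PlS: "(\<lambda>t. js (Suc t)) \<in> Pl n l" using Pl_shift[of js n l] jsg(2) jseq R(4) a0(1) by simp
  have ip: "w \<in> inf_prod (\<lambda>t. pd_mat n Mb (\<pi>s t) (js t) (\<pi>s (Suc t)) (js (Suc t)))"
    unfolding inf_prod_def mem_Collect_eq
    by (rule exI[of _ X]) (use R(5) ocX infX in blast)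
  have "w \<in> mat_omega n l (pd_mat n Mb) [p0] (iz 0)"
    unfolding mat_omega_def mem_Collect_eq
    by (rule exI[of _ \<pi>s], rule exI[of _ js]) (use R(3,4) st0 PlS ip in simp)
  moreover have "ws 0 \<in> sym_lang (Iv (iz 0))" using ws0 a0(2) by (simp add: sym_lang_ol)
  ultimately show ?thesis using Wf a0(1) by blast
qed

lemma choice2: "\<forall>m. \<exists>a b. P m a b \<Longrightarrow> \<exists>A B. \<forall>m. P m (A m) (B m)"
  by metis

lemma omega_sub2:
  fixes Mb :: "'g \<Rightarrow> 'g list \<Rightarrow> nat \<Rightarrow> nat \<Rightarrow> 'a option set"
  assumes "W \<in> (\<Union>i\<in>{1..n}. {fw_conc u w | u w. u \<in> sym_lang (Iv i) \<and>
                          w \<in> mat_omega n l (pd_mat n Mb) [p0] i})"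
  shows "W \<in> {w. \<exists>\<alpha> iz q ws is.
        GZ n Mb Iv p0 Z0 (\<alpha> 0 @ [Zp (iz 0) (q 0)]) \<and>
        (\<forall>m. GZ n Mb Iv p0 (Zp (iz m) (q m)) (\<alpha> (Suc m) @ [Zp (iz (Suc m)) (q (Suc m))])) \<and>
        (\<forall>m. lderiv (GX n Mb Iv Pv p0) (\<alpha> m) (is m) (map Tm (ws m))) \<and>
        infinite {m. ws m \<noteq> []} \<and> omega_concat ws w \<and>
        (\<exists>js. omega_concat (\<lambda>m. case m of 0 \<Rightarrow> [iz 0] | Suc k \<Rightarrow> is (Suc k) @ [iz (Suc k)]) js
              \<and> js \<in> Pl n l)}"
proof -
  from assms obtain i u w where iuw: "i \<in> {1..n}" "u \<in> sym_lang (Iv i)"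
    "w \<in> mat_omega n l (pd_mat n Mb) [p0] i" "W = fw_conc u w" by blast
  from iuw(2) obtain a0 where a0: "a0 \<in> Iv i" "u = ol a0" by (auto simp: sym_lang_ol)
  from iuw(3) obtain \<pi>s js where pj: "\<pi>s 0 = [p0]" "js 0 = i" "(\<lambda>t. js (Suc t)) \<in> Pl n l"
    "w \<in> inf_prod (\<lambda>t. pd_mat n Mb (\<pi>s t) (js t) (\<pi>s (Suc t)) (js (Suc t)))"
    unfolding mat_omega_def by blast
  from pj(4) obtain X where X: "\<And>t. X t \<in> pd_mat n Mb (\<pi>s t) (js t) (\<pi>s (Suc t)) (js (Suc t))"
    "infinite {t. X t \<noteq> []}" "omega_concat X w"
    unfolding inf_prod_def by blast
  from spine[OF X(1) pj(1)] obtain B where B: "B 0 = 0" "\<forall>m. B m < B (Suc m)"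
    "\<forall>m. \<exists>a xs. GZ n Mb Iv p0 (Zp (js (B m)) (hd (\<pi>s (B m))))
                  (opt_tm a @ xs @ [Zp (js (B (Suc m))) (hd (\<pi>s (B (Suc m))))]) \<and>
              lderiv (GX n Mb Iv Pv p0) (opt_tm a @ xs) (map js [Suc (B m)..<B (Suc m)])
                 (map Tm (concat (map X [B m..<B (Suc m)])))"
    by blast
  from choice2[OF B(3)] obtain AZ XS where Z: "\<And>m. GZ n Mb Iv p0 (Zp (js (B m)) (hd (\<pi>s (B m))))
                  (opt_tm (AZ m) @ XS m @ [Zp (js (B (Suc m))) (hd (\<pi>s (B (Suc m))))]) \<and>
              lderiv (GX n Mb Iv Pv p0) (opt_tm (AZ m) @ XS m) (map js [Suc (B m)..<B (Suc m)])
                 (map Tm (concat (map X [B m..<B (Suc m)])))"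
    by blast
  have Bm: "\<And>m. B m < B (Suc m)" using B(2) by blast
  define \<alpha> where "\<alpha> = case_nat (opt_tm a0) (\<lambda>m. opt_tm (AZ m) @ XS m)"
  define iz where "iz m = js (B m)" for m
  define q where "q m = hd (\<pi>s (B m))" for m
  define ws where "ws = case_nat (ol a0) (\<lambda>m. concat (map X [B m..<B (Suc m)]))"
  define iss where "iss = case_nat [] (\<lambda>m. map js [Suc (B m)..<B (Suc m)])"
  have c1: "GZ n Mb Iv p0 Z0 (\<alpha> 0 @ [Zp (iz 0) (q 0)])"
    unfolding GZ_def \<alpha>_def iz_def q_def using B(1) pj(1,2) iuw(1) a0(1) by auto
  have c2: "\<forall>m. GZ n Mb Iv p0 (Zp (iz m) (q m)) (\<alpha> (Suc m) @ [Zp (iz (Suc m)) (q (Suc m))])"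
    unfolding \<alpha>_def iz_def q_def using Z by simp
  have c3: "\<forall>m. lderiv (GX n Mb Iv Pv p0) (\<alpha> m) (iss m) (map Tm (ws m))"
  proof
    fix m show "lderiv (GX n Mb Iv Pv p0) (\<alpha> m) (iss m) (map Tm (ws m))"
    proof (cases m)
      case 0 then show ?thesis unfolding \<alpha>_def iss_def ws_def by (simp add: opt_tm_ol lderiv.refl)
    next
      case (Suc m') then show ?thesis unfolding \<alpha>_def iss_def ws_def using Z[of m'] by simp
    qed
  qed
  have wsS: "\<And>m. ws (Suc m) = concat (map X [B m..<B (Suc m)])" unfolding ws_def by simp
  have c4: "infinite {m. ws m \<noteq> []}" using seg_infinite[of B ws X, OF B(1) Bm wsS] X(2) by simp
  have c5: "omega_concat ws W"
    using seg_omega[of B ws X w, OF B(1) Bm wsS] X(3) iuw(4) a0(2) unfolding ws_def by simp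
  define G where "G = (\<lambda>m. case m of 0 \<Rightarrow> [iz 0] | Suc k \<Rightarrow> iss (Suc k) @ [iz (Suc k)])"
  have g0: "G 0 = [js 0]" unfolding G_def iz_def using B(1) by simp
  have gS: "\<And>m. G (Suc m) = map js [Suc (B m)..<B (Suc m)] @ [js (B (Suc m))]"
    unfolding G_def iz_def iss_def by simp
  have c6: "omega_concat (\<lambda>m. case m of 0 \<Rightarrow> [iz 0] | Suc k \<Rightarrow> iss (Suc k) @ [iz (Suc k)]) js"
    using seg_states[of B G js js, OF B(1) Bm g0 gS] unfolding G_def by simp
  have c7: "js \<in> Pl n l" using Pl_shift[of js n l] pj(2,3) iuw(1) by simp
  show ?thesis
    apply (simp only: mem_Collect_eq)
    apply (rule exI[of _ \<alpha>], rule exI[of _ iz], rule exI[of _ q], rule exI[of _ ws], rule exI[of _ iss])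
    using c1 c2 c3 c4 c5 c6 c7 by blast
qed

lemma omega_part:
  fixes Mb :: "'g \<Rightarrow> 'g list \<Rightarrow> nat \<Rightarrow> nat \<Rightarrow> 'a option set"
  shows "{w. \<exists>\<alpha> iz q ws is.
        GZ n Mb Iv p0 Z0 (\<alpha> 0 @ [Zp (iz 0) (q 0)]) \<and>
        (\<forall>m. GZ n Mb Iv p0 (Zp (iz m) (q m)) (\<alpha> (Suc m) @ [Zp (iz (Suc m)) (q (Suc m))])) \<and>
        (\<forall>m. lderiv (GX n Mb Iv Pv p0) (\<alpha> m) (is m) (map Tm (ws m))) \<and>
        infinite {m. ws m \<noteq> []} \<and> omega_concat ws w \<and>
        (\<exists>js. omega_concat (\<lambda>m. case m of 0 \<Rightarrow> [iz 0] | Suc k \<Rightarrow> is (Suc k) @ [iz (Suc k)]) js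
              \<and> js \<in> Pl n l)} =
   (\<Union>i\<in>{1..n}. {fw_conc u w | u w. u \<in> sym_lang (Iv i) \<and>
                          w \<in> mat_omega n l (pd_mat n Mb) [p0] i})"
proof (intro equalityI subsetI)
  fix W
  assume "W \<in> {w. \<exists>\<alpha> iz q ws is.
        GZ n Mb Iv p0 Z0 (\<alpha> 0 @ [Zp (iz 0) (q 0)]) \<and>
        (\<forall>m. GZ n Mb Iv p0 (Zp (iz m) (q m)) (\<alpha> (Suc m) @ [Zp (iz (Suc m)) (q (Suc m))])) \<and>
        (\<forall>m. lderiv (GX n Mb Iv Pv p0) (\<alpha> m) (is m) (map Tm (ws m))) \<and>
        infinite {m. ws m \<noteq> []} \<and> omega_concat ws w \<and>
        (\<exists>js. omega_concat (\<lambda>m. case m of 0 \<Rightarrow> [iz 0] | Suc k \<Rightarrow> is (Suc k) @ [iz (Suc k)]) js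
              \<and> js \<in> Pl n l)}"
  then obtain \<alpha> iz q ws iss jsg where
    h: "GZ n Mb Iv p0 Z0 (\<alpha> 0 @ [Zp (iz 0) (q 0)])"
       "\<forall>m. GZ n Mb Iv p0 (Zp (iz m) (q m)) (\<alpha> (Suc m) @ [Zp (iz (Suc m)) (q (Suc m))])"
       "\<forall>m. lderiv (GX n Mb Iv Pv p0) (\<alpha> m) (iss m) (map Tm (ws m))"
       "infinite {m. ws m \<noteq> []}" "omega_concat ws W"
       "omega_concat (\<lambda>m. case m of 0 \<Rightarrow> [iz 0] | Suc k \<Rightarrow> iss (Suc k) @ [iz (Suc k)]) jsg"
       "jsg \<in> Pl n l"
    by blast
  show "W \<in> (\<Union>i\<in>{1..n}. {fw_conc u w | u w. u \<in> sym_lang (Iv i) \<and>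
                          w \<in> mat_omega n l (pd_mat n Mb) [p0] i})"
    by (rule omega_sub1[OF h(1) h(2)[rule_format] h(3)[rule_format] h(4) h(5) h(6) h(7)])
next
  fix W
  assume "W \<in> (\<Union>i\<in>{1..n}. {fw_conc u w | u w. u \<in> sym_lang (Iv i) \<and>
                          w \<in> mat_omega n l (pd_mat n Mb) [p0] i})"
  then show "W \<in> {w. \<exists>\<alpha> iz q ws is.
        GZ n Mb Iv p0 Z0 (\<alpha> 0 @ [Zp (iz 0) (q 0)]) \<and>
        (\<forall>m. GZ n Mb Iv p0 (Zp (iz m) (q m)) (\<alpha> (Suc m) @ [Zp (iz (Suc m)) (q (Suc m))])) \<and>
        (\<forall>m. lderiv (GX n Mb Iv Pv p0) (\<alpha> m) (is m) (map Tm (ws m))) \<and>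
        infinite {m. ws m \<noteq> []} \<and> omega_concat ws w \<and>
        (\<exists>js. omega_concat (\<lambda>m. case m of 0 \<Rightarrow> [iz 0] | Suc k \<Rightarrow> is (Suc k) @ [iz (Suc k)]) js
              \<and> js \<in> Pl n l)}"
    by (rule omega_sub2)
qed

theorem corollary15:
  fixes n :: nat
    and Mb :: "'g::finite \<Rightarrow> 'g list \<Rightarrow> nat \<Rightarrow> nat \<Rightarrow> ('a::finite) option set"
    and Iv Pv :: "nat \<Rightarrow> 'a option set"
    and p0 :: 'g and l :: nat
  assumes "pd_trans_wf n Mb" and "l \<le> n"
  shows "mcfg_lang (GX n Mb Iv Pv p0) (GZ n Mb Iv p0) n l = pda_behaviour n Mb Iv Pv p0 l"
  unfolding mcfg_lang_def pda_behaviour_def finite_part omega_part ..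

end
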